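(* Let $n,k$ be integers with $1<k<n-1$, let $\mathcal{P}_{k,n}=\{x\in[0,1]^n:\sum_{i=1}^nx_i=k\}$, let $\mathcal{F}$ be a strong Bernoulli factory for $\mathcal{P}_{k,n}$, and let $v,v'$ be two distinct vertices of $\mathcal{P}_{k,n}$. Then for every $T\ge0$, $\nabla P_{v,T}(v')=0$.
   Context: A Bernoulli factory with output set $V$ (for inputs $x\in[0,1]^n$) is a (possibly infinite) rooted binary tree whose internal nodes are labeled by an index $i\in[n]$ or a known constant $c\in(0,1)$ and whose leaves are labeled by elements of $V$; on input $x$ one walks from the root, at a node labeled $i$ flipping a fresh independent coin that is $1$ with probability $x_i$, at a node labeled $c$ a fresh coin of bias $c$, following the edge labeled by the outcome, and outputs the label of the leaf reached; $\mathcal{F}(x)$ is the output and $T_{\mathcal{F}}(x)$ the depth of the leaf reached. For a polytope $\mathcal{P}$ with vertex set $V$, a strong Bernoulli factory for $\mathcal{P}$ is such a factory with output set $V$ that terminates almost surely and satisfies $\mathbb{E}[\mathcal{F}(x)]=x$ for all $x\in\mathcal{P}$. $P_{v,T}(x)=\Pr[\mathcal{F}(x)=v\wedge T_{\mathcal{F}}(x)\le T]$, regarded as the polynomial on $\mathbb{R}^n$ equal to the sum, over leaves labeled $v$ at depth at most $T$, of the product of the transition probabilities along the root-to-leaf path; $\nabla$ is its gradient in $\mathbb{R}^n$. *)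

theory Defs
  imports "HOL-Analysis.Analysis"
begin

text \<open>A (possibly infinite) rooted binary tree is represented by a labelling of
  all finite bool-paths from the root (True = coin outcome 1, False = outcome 0).
  Only the labels of paths all of whose proper prefixes are internal nodes matter.\<close>

datatype ('i, 'v) node = Query 'i | Const real | Leaf 'v

type_synonym ('i, 'v) tree = "bool list \<Rightarrow> ('i, 'v) node"

definition is_internal :: "('i, 'v) node \<Rightarrow> bool" where
  "is_internal a \<longleftrightarrow> (case a of Leaf _ \<Rightarrow> False | _ \<Rightarrow> True)"

definition is_node :: "('i, 'v) tree \<Rightarrow> bool list \<Rightarrow> bool" where
  "is_node t p \<longleftrightarrow> (\<forall>j < length p. is_internal (t (take j p)))"

definition leaf_at :: "('i, 'v) tree \<Rightarrow> bool list \<Rightarrow> 'v \<Rightarrow> bool" where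
  "leaf_at t p v \<longleftrightarrow> is_node t p \<and> t p = Leaf v"

definition trans_prob :: "('i, 'v) node \<Rightarrow> bool \<Rightarrow> (real ^ 'i) \<Rightarrow> real" where
  "trans_prob a b x = (case a of
      Query i \<Rightarrow> (if b then x $ i else 1 - x $ i)
    | Const c \<Rightarrow> (if b then c else 1 - c)
    | Leaf _ \<Rightarrow> 0)"

definition path_prob :: "('i, 'v) tree \<Rightarrow> bool list \<Rightarrow> (real ^ 'i) \<Rightarrow> real" where
  "path_prob t p x = (\<Prod>j<length p. trans_prob (t (take j p)) (p ! j) x)"

definition P_vT :: "('i, 'v) tree \<Rightarrow> 'v \<Rightarrow> nat \<Rightarrow> (real ^ 'i) \<Rightarrow> real" where
  "P_vT t v T x = (\<Sum>p\<in>{p. length p \<le> T \<and> leaf_at t p v}. path_prob t p x)"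

definition P_T :: "('i, 'v) tree \<Rightarrow> nat \<Rightarrow> (real ^ 'i) \<Rightarrow> real" where
  "P_T t T x = (\<Sum>p\<in>{p. length p \<le> T \<and> (\<exists>v. leaf_at t p v)}. path_prob t p x)"

definition bernoulli_factory :: "('i::finite, 'v) tree \<Rightarrow> 'v set \<Rightarrow> bool" where
  "bernoulli_factory t V \<longleftrightarrow>
     (\<forall>p c. is_node t p \<and> t p = Const c \<longrightarrow> 0 < c \<and> c < 1) \<and>
     (\<forall>p v. leaf_at t p v \<longrightarrow> v \<in> V)"

definition vertices :: "('a::real_vector) set \<Rightarrow> 'a set" where
  "vertices S = {v. v extreme_point_of S}"

text \<open>Strong Bernoulli factory for the polytope S: output set = vertex set of S,
  almost-sure termination and E[F(x)] = x for all x in S, where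
  Pr[F(x) = v] = lim_T P_{v,T}(x).\<close>
definition strong_bernoulli_factory :: "('i::finite, real ^ 'i) tree \<Rightarrow> (real ^ 'i) set \<Rightarrow> bool" where
  "strong_bernoulli_factory t S \<longleftrightarrow>
     bernoulli_factory t (vertices S) \<and>
     (\<forall>x\<in>S. (\<lambda>T. P_T t T x) \<longlonglongrightarrow> 1) \<and>
     (\<forall>x\<in>S. (\<Sum>v\<in>vertices S. lim (\<lambda>T. P_vT t v T x) *\<^sub>R v) = x)"

definition P_kn :: "nat \<Rightarrow> (real ^ 'n::finite) set" where
  "P_kn k = {x. (\<forall>i. 0 \<le> x $ i \<and> x $ i \<le> 1) \<and> (\<Sum>i\<in>UNIV. x $ i) = real k}"

end

theory Submission
  imports Defs
begin

lemma dir_nonneg: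
  fixes f :: "real^'n \<Rightarrow> real"
  assumes fd: "(f has_derivative D) (at x)" and f0: "f x = 0" and dpos: "\<delta> > 0"
    and nn: "\<And>s. 0 < s \<Longrightarrow> s \<le> \<delta> \<Longrightarrow> f (x + s *\<^sub>R d) \<ge> 0"
  shows "D d \<ge> 0"
proof -
  have lin: "linear D" using fd has_derivative_linear by blast
  have g: "((\<lambda>s::real. x + s *\<^sub>R d) has_derivative (\<lambda>s. s *\<^sub>R d)) (at 0)"
    by (auto intro!: derivative_eq_intros)
  have "((f \<circ> (\<lambda>s::real. x + s *\<^sub>R d)) has_derivative (D \<circ> (\<lambda>s. s *\<^sub>R d))) (at 0)"
    by (rule diff_chain_at[OF g]) (simp add: fd)
  moreover have "(D \<circ> (\<lambda>s. s *\<^sub>R d)) = (\<lambda>s. D d * s)"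
    using lin by (auto simp: linear_scale o_def)
  ultimately have "((\<lambda>s. f (x + s *\<^sub>R d)) has_real_derivative D d) (at 0)"
    by (simp add: has_field_derivative_def o_def)
  note has_field_derivative_iff[THEN iffD1, OF this]
  hence "((\<lambda>s. (f (x + s *\<^sub>R d) - f (x + 0 *\<^sub>R d)) / (s - 0)) \<longlongrightarrow> D d) (at 0)"
    by simp
  hence lim: "((\<lambda>s. f (x + s *\<^sub>R d) / s) \<longlongrightarrow> D d) (at_right 0)"
    using f0 by (auto intro: tendsto_mono[OF at_le])
  have ev: "eventually (\<lambda>s. 0 \<le> f (x + s *\<^sub>R d) / s) (at_right (0::real))"
    unfolding eventually_at_right_field using dpos nn by (intro exI[of _ \<delta>]) auto
  show ?thesis by (rule tendsto_lowerbound[OF lim ev]) simp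
qed

lemma dir_zero:
  fixes f :: "real^'n \<Rightarrow> real"
  assumes fd: "(f has_derivative D) (at x)" and f0: "f x = 0" and dpos: "\<delta> > 0"
    and nn: "\<And>s. 0 < s \<Longrightarrow> s \<le> \<delta> \<Longrightarrow> f (x + s *\<^sub>R d) = 0"
  shows "D d = 0"
proof -
  have "D d \<ge> 0" using dir_nonneg[OF fd f0 dpos] nn by simp
  moreover have "(- D d) \<ge> 0"
    using dir_nonneg[OF has_derivative_minus[OF fd], of \<delta> d] f0 dpos nn by simp
  ultimately show ?thesis by simp
qed

lemma node_take: "is_node t p \<Longrightarrow> j \<le> length p \<Longrightarrow> is_node t (take j p)"
  unfolding is_node_def by (auto simp: min_def)

lemma trans_nonneg:
  assumes "bernoulli_factory t V" "is_node t q" "\<forall>i. 0 \<le> x$i \<and> x$i \<le> 1"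
  shows "0 \<le> trans_prob (t q) b x"
proof (cases "t q")
  case (Const c)
  then have "0 < c \<and> c < 1" using assms(1,2) unfolding bernoulli_factory_def by blast
  then show ?thesis using Const by (simp add: trans_prob_def)
qed (use assms(3) in \<open>auto simp: trans_prob_def\<close>)

lemma path_nonneg:
  assumes "bernoulli_factory t V" "is_node t p" "\<forall>i. 0 \<le> x$i \<and> x$i \<le> 1"
  shows "0 \<le> path_prob t p x"
  unfolding path_prob_def
  by (rule prod_nonneg) (meson assms trans_nonneg node_take less_imp_le lessThan_iff)

lemma fin_paths: "finite {p::bool list. length p \<le> T \<and> Q p}"
  by (rule rev_finite_subset[OF finite_lists_length_le[of UNIV T]]) auto

lemma P_vT_nonneg:
  assumes "bernoulli_factory t V" "\<forall>i. 0 \<le> x$i \<and> x$i \<le> 1"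
  shows "0 \<le> P_vT t v T x"
  unfolding P_vT_def by (rule sum_nonneg) (use assms path_nonneg in \<open>auto simp: leaf_at_def\<close>)

lemma P_vT_mono:
  assumes "bernoulli_factory t V" "\<forall>i. 0 \<le> x$i \<and> x$i \<le> 1" "T \<le> T'"
  shows "P_vT t v T x \<le> P_vT t v T' x"
  unfolding P_vT_def
  by (rule sum_mono2[OF fin_paths]) (use assms path_nonneg in \<open>auto simp: leaf_at_def\<close>)

lemma P_T_mono:
  assumes "bernoulli_factory t V" "\<forall>i. 0 \<le> x$i \<and> x$i \<le> 1" "T \<le> T'"
  shows "P_T t T x \<le> P_T t T' x"
  unfolding P_T_def
  by (rule sum_mono2[OF fin_paths]) (use assms path_nonneg in \<open>auto simp: leaf_at_def\<close>)

lemma P_vT_le_P_T: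
  assumes "bernoulli_factory t V" "\<forall>i. 0 \<le> x$i \<and> x$i \<le> 1"
  shows "P_vT t v T x \<le> P_T t T x"
  unfolding P_vT_def P_T_def
  by (rule sum_mono2[OF fin_paths]) (use assms path_nonneg in \<open>auto simp: leaf_at_def\<close>)

lemma lim_facts:
  assumes "bernoulli_factory t V" "\<forall>i. 0 \<le> x$i \<and> x$i \<le> 1"
    and lim1: "(\<lambda>T. P_T t T x) \<longlonglongrightarrow> 1"
  shows "P_vT t v T x \<le> lim (\<lambda>T. P_vT t v T x)" "0 \<le> lim (\<lambda>T. P_vT t v T x)"
proof -
  have inc1: "incseq (\<lambda>T. P_T t T x)" using P_T_mono[OF assms(1,2)] by (simp add: incseq_def)
  have inc: "incseq (\<lambda>T. P_vT t v T x)" using P_vT_mono[OF assms(1,2)] by (simp add: incseq_def)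
  have "\<And>T. P_vT t v T x \<le> 1"
    using P_vT_le_P_T[OF assms(1,2)] incseq_le[OF inc1 lim1] order_trans by blast
  hence "Bseq (\<lambda>T. P_vT t v T x)"
    using P_vT_nonneg[OF assms(1,2)] by (intro BseqI'[of _ 1]) auto
  hence "convergent (\<lambda>T. P_vT t v T x)"
    using inc Bseq_monoseq_convergent incseq_imp_monoseq by blast
  hence L: "(\<lambda>T. P_vT t v T x) \<longlonglongrightarrow> lim (\<lambda>T. P_vT t v T x)" by (simp add: convergent_LIMSEQ_iff)
  show "P_vT t v T x \<le> lim (\<lambda>T. P_vT t v T x)" by (rule incseq_le[OF inc L])
  thus "0 \<le> lim (\<lambda>T. P_vT t v T x)" using P_vT_nonneg[OF assms(1,2)] order_trans by blast
qed

lemma sum_axis: "(\<Sum>l\<in>UNIV. axis i (1::real) $ l) = 1"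
  by (simp add: axis_def)

lemma sum01_int:
  fixes v :: "real^'n"
  assumes "\<forall>j\<in>A. v$j = 0 \<or> v$j = 1" "finite A"
  shows "(\<Sum>j\<in>A. v$j) = real (card {j\<in>A. v$j = 1})"
proof -
  have "(\<Sum>j\<in>A. v$j) = (\<Sum>j\<in>A. if v$j = 1 then 1 else 0)"
    by (rule sum.cong) (use assms in auto)
  also have "\<dots> = real (card {j\<in>A. v$j = 1})"
    using assms(2) by (simp add: sum.If_cases Int_def)
  finally show ?thesis .
qed

lemma vert_in: "v \<in> vertices S \<Longrightarrow> v \<in> S"
  unfolding vertices_def extreme_point_of_def by auto

lemma vert_01:
  fixes v :: "real^'n::finite"
  assumes "v \<in> vertices (P_kn k)"
  shows "v$i = 0 \<or> v$i = 1"
proof (rule ccontr)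
  assume "\<not> (v$i = 0 \<or> v$i = 1)"
  have vin: "v \<in> P_kn k" using vert_in[OF assms] .
  hence box: "\<forall>l. 0 \<le> v$l \<and> v$l \<le> 1" and sv: "(\<Sum>l\<in>UNIV. v$l) = real k"
    unfolding P_kn_def by auto
  with \<open>\<not> _\<close> have fi: "0 < v$i" "v$i < 1" by (auto simp: less_le)
  have "\<exists>j. j \<noteq> i \<and> 0 < v$j \<and> v$j < 1"
  proof (rule ccontr)
    assume "\<not> ?thesis"
    hence "\<forall>j\<in>UNIV - {i}. v$j = 0 \<or> v$j = 1" using box by (auto simp: less_le)
    hence "(\<Sum>j\<in>UNIV-{i}. v$j) = real (card {j\<in>UNIV-{i}. v$j = 1})"
      by (intro sum01_int) auto
    moreover have "(\<Sum>l\<in>UNIV. v$l) = v$i + (\<Sum>j\<in>UNIV-{i}. v$j)"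
      by (simp add: sum.remove)
    ultimately have "v$i = real k - real (card {j\<in>UNIV-{i}. v$j = 1})" using sv by simp
    then have "real (card {j\<in>UNIV-{i}. v$j = 1}) < real k" "real k < real (card {j\<in>UNIV-{i}. v$j = 1}) + 1"
      using fi by linarith+
    then show False by (metis of_nat_1 of_nat_add of_nat_less_iff less_Suc_eq_le not_le Suc_eq_plus1)
  qed
  then obtain j where j: "j \<noteq> i" "0 < v$j" "v$j < 1" by blast
  define e where "e = min (min (v$i) (1-v$i)) (min (v$j) (1-v$j))"
  have e: "e > 0" "e \<le> v$i" "e \<le> 1 - v$i" "e \<le> v$j" "e \<le> 1 - v$j"
    using fi j unfolding e_def by auto
  define d :: "real^'n" where "d = axis i 1 - axis j 1"
  have dsum: "(\<Sum>l\<in>UNIV. d$l) = 0" unfolding d_def by (simp add: sum_subtractf sum_axis)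
  have dl: "d$l = (if l = i then 1 else 0) - (if l = j then 1 else 0)" for l
    unfolding d_def by (simp add: axis_def)
  have inS: "v + c *\<^sub>R d \<in> P_kn k" if "c = e \<or> c = -e" for c
  proof -
    have "0 \<le> (v + c *\<^sub>R d)$l \<and> (v + c *\<^sub>R d)$l \<le> 1" for l
    proof -
      have eq: "(v + c *\<^sub>R d)$l = v$l + c * d$l" by simp
      have "l = i \<or> l = j \<or> (l \<noteq> i \<and> l \<noteq> j)" by blast
      thus ?thesis
      proof (elim disjE)
        assume "l = i" thus ?thesis using eq dl[of l] j(1) e that by auto
      next
        assume "l = j" thus ?thesis using eq dl[of l] j(1) e that by auto
      next
        assume "l \<noteq> i \<and> l \<noteq> j" thus ?thesis using eq dl[of l] box by auto
      qed
    qed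
    moreover have "(\<Sum>l\<in>UNIV. (v + c *\<^sub>R d)$l) = real k"
      using sv dsum by (simp add: sum.distrib sum_distrib_left[symmetric])
    ultimately show ?thesis unfolding P_kn_def by auto
  qed
  have ne: "v + e *\<^sub>R d \<noteq> v + (-e) *\<^sub>R d"
  proof
    assume "v + e *\<^sub>R d = v + (-e) *\<^sub>R d"
    hence "(v + e *\<^sub>R d)$i = (v + (-e) *\<^sub>R d)$i" by (rule arg_cong)
    hence "v$i + e * d$i = v$i - e * d$i" by simp
    moreover have "d$i = 1" using j(1) dl[of i] by simp
    ultimately show False using e(1) by simp
  qed
  have mid: "midpoint (v + e *\<^sub>R d) (v + (-e) *\<^sub>R d) = v"
    by (simp add: midpoint_def vec_eq_iff)
  have "v \<in> open_segment (v + e *\<^sub>R d) (v + (-e) *\<^sub>R d)"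
    using midpoint_in_open_segment[of "v + e *\<^sub>R d" "v + (-e) *\<^sub>R d"] ne mid by metis
  moreover have "v extreme_point_of P_kn k" using assms unfolding vertices_def by simp
  ultimately show False using inS unfolding extreme_point_of_def by blast
qed

lemma vert_finite: "finite (vertices (P_kn k :: (real^'n::finite) set))"
proof -
  have "vertices (P_kn k :: (real^'n) set) \<subseteq> (\<lambda>f. \<chi> i. if f i then 1 else 0) ` (UNIV :: ('n \<Rightarrow> bool) set)"
  proof
    fix v :: "real^'n" assume "v \<in> vertices (P_kn k)"
    hence "v = (\<chi> i. if v$i = 1 then 1 else 0)" using vert_01[of v k] by (auto simp: vec_eq_iff)
    thus "v \<in> (\<lambda>f. \<chi> i. if f i then 1 else 0) ` UNIV"
      by (rule image_eqI[where x="\<lambda>i. v$i = 1"]) simp_all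
  qed
  thus ?thesis by (rule finite_subset) simp
qed

lemma bounds:
  fixes t :: "('n::finite, real ^ 'n) tree" and x v :: "real^'n"
  assumes k0: "0 < k" and sf: "strong_bernoulli_factory t (P_kn k)"
    and xS: "x \<in> P_kn k" and vV: "v \<in> vertices (P_kn k)"
  shows "\<And>i. v$i = 1 \<Longrightarrow> P_vT t v T x \<le> x$i"
    and "\<And>j. v$j = 0 \<Longrightarrow> P_vT t v T x \<le> 1 - x$j"
proof -
  let ?V = "vertices (P_kn k :: (real^'n) set)"
  define q where "q w = lim (\<lambda>T. P_vT t w T x)" for w
  have bf: "bernoulli_factory t ?V" and l1: "(\<lambda>T. P_T t T x) \<longlonglongrightarrow> 1"
    and sx: "(\<Sum>w\<in>?V. q w *\<^sub>R w) = x"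
    using sf xS unfolding strong_bernoulli_factory_def q_def by auto
  have box: "\<forall>i. 0 \<le> x$i \<and> x$i \<le> 1" and xsum: "(\<Sum>l\<in>UNIV. x$l) = real k"
    using xS unfolding P_kn_def by auto
  have qn: "0 \<le> q w" for w using lim_facts(2)[OF bf box l1] unfolding q_def .
  have Pq: "P_vT t v T x \<le> q v" using lim_facts(1)[OF bf box l1] unfolding q_def .
  have fin: "finite ?V" by (rule vert_finite)
  have wbox: "0 \<le> w$l \<and> w$l \<le> 1" if "w \<in> ?V" for w l
    using vert_in[OF that] unfolding P_kn_def by auto
  have wsum: "(\<Sum>l\<in>UNIV. w$l) = real k" if "w \<in> ?V" for w
    using vert_in[OF that] unfolding P_kn_def by auto
  have xc: "x$l = (\<Sum>w\<in>?V. q w * w$l)" for l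
    using arg_cong[OF sx, of "\<lambda>y. y$l"] by simp
  have "real k = (\<Sum>l\<in>UNIV. \<Sum>w\<in>?V. q w * w$l)" using xsum xc by simp
  also have "\<dots> = (\<Sum>w\<in>?V. q w * (\<Sum>l\<in>UNIV. w$l))"
    by (subst sum.swap) (simp add: sum_distrib_left)
  also have "\<dots> = (\<Sum>w\<in>?V. q w) * real k"
    by (simp add: wsum sum_distrib_right)
  finally have qsum: "(\<Sum>w\<in>?V. q w) = 1" using k0 by simp
  show "P_vT t v T x \<le> x$i" if "v$i = 1" for i
  proof -
    have "q v * v$i \<le> (\<Sum>w\<in>?V. q w * w$i)"
      by (rule member_le_sum[OF vV _ fin]) (simp add: qn wbox)
    thus ?thesis using that xc Pq by simp
  qed
  show "P_vT t v T x \<le> 1 - x$j" if "v$j = 0" for j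
  proof -
    have "1 - x$j = (\<Sum>w\<in>?V. q w * (1 - w$j))"
      using qsum xc[of j] by (simp add: algebra_simps sum_subtractf)
    moreover have "q v * (1 - v$j) \<le> (\<Sum>w\<in>?V. q w * (1 - w$j))"
      by (rule member_le_sum[OF vV _ fin]) (simp add: qn wbox)
    ultimately show ?thesis using that Pq by simp
  qed
qed

lemma trans_diff: "(\<lambda>x. trans_prob a b x) differentiable (at y)"
proof (cases a)
  case (Query i)
  have "(\<lambda>x::real^'a. x$i) differentiable (at y)"
    by (rule bounded_linear_imp_differentiable) (rule bounded_linear_vec_nth)
  then show ?thesis using Query by (cases b) (auto simp: trans_prob_def)
qed (auto simp: trans_prob_def)

lemma diff_prod_lt:
  fixes f :: "nat \<Rightarrow> real^'a \<Rightarrow> real"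
  shows "(\<And>j. j < n \<Longrightarrow> f j differentiable (at y)) \<Longrightarrow> (\<lambda>x. \<Prod>j<n. f j x) differentiable (at y)"
proof (induction n)
  case 0 then show ?case by simp
next
  case (Suc n)
  have "(\<lambda>x. (\<Prod>j<n. f j x) * f n x) differentiable (at y)"
    by (rule differentiable_mult) (use Suc in auto)
  then show ?case by (simp add: lessThan_Suc mult.commute)
qed

lemma P_vT_diff: "P_vT t v T differentiable (at y)"
proof -
  have "(\<lambda>x. P_vT t v T x) differentiable (at y)"
    unfolding P_vT_def path_prob_def
    by (rule differentiable_sum) (auto intro: fin_paths diff_prod_lt trans_diff)
  thus ?thesis by simp
qed

lemma seg_in:
  fixes w :: "real^'n::finite"
  assumes "w \<in> P_kn k" "w$a = 0" "w$b = 1" "0 \<le> s" "s \<le> 1"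
  shows "w + s *\<^sub>R (axis a 1 - axis b 1) \<in> P_kn k"
proof -
  have ab: "a \<noteq> b" using assms(2,3) by auto
  have box: "\<forall>l. 0 \<le> w$l \<and> w$l \<le> 1" and sw: "(\<Sum>l\<in>UNIV. w$l) = real k"
    using assms(1) unfolding P_kn_def by auto
  have c: "(w + s *\<^sub>R (axis a 1 - axis b 1))$l = w$l + s * ((if l = a then 1 else 0) - (if l = b then 1 else 0))" for l
    by (simp add: axis_def)
  have "0 \<le> (w + s *\<^sub>R (axis a 1 - axis b 1))$l \<and> (w + s *\<^sub>R (axis a 1 - axis b 1))$l \<le> 1" for l
    unfolding c using box assms(2-5) ab by auto
  moreover have "(\<Sum>l\<in>UNIV. (w + s *\<^sub>R (axis a 1 - axis b 1))$l) = real k"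
    using sw by (simp add: sum.distrib sum_subtractf sum_axis sum_distrib_left[symmetric])
  ultimately show ?thesis unfolding P_kn_def by auto
qed

lemma seg_coord:
  fixes w :: "real^'n::finite"
  assumes "l \<noteq> a" "l \<noteq> b"
  shows "(w + s *\<^sub>R (axis a 1 - axis b 1))$l = w$l"
  using assms by (simp add: axis_def)

theorem lemma7p5:
  fixes t :: "('n::finite, real ^ 'n) tree"
    and k :: nat and v v' :: "real ^ 'n" and T :: nat
  assumes "1 < k" and "k + 1 < CARD('n)"
    and "strong_bernoulli_factory t (P_kn k)"
    and "v \<in> vertices (P_kn k :: (real ^ 'n) set)"
    and "v' \<in> vertices (P_kn k :: (real ^ 'n) set)"
    and "v \<noteq> v'"
  shows "(P_vT t v T has_derivative (\<lambda>h. 0)) (at v')"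
proof -
  note sf = assms(3) and vV = assms(4) and v'V = assms(5)
  let ?S = "P_kn k :: (real^'n) set"
  let ?f = "P_vT t v T"
  have k0: "0 < k" using assms(1) by simp
  obtain D where fd: "(?f has_derivative D) (at v')"
    using P_vT_diff[of t v T v'] unfolding differentiable_def by blast
  have lin: "linear D" using fd has_derivative_linear by blast
  have bf: "bernoulli_factory t (vertices ?S)" using sf unfolding strong_bernoulli_factory_def by simp
  have v01: "v$i = 0 \<or> v$i = 1" for i using vert_01[OF vV] .
  have v'01: "v'$i = 0 \<or> v'$i = 1" for i using vert_01[OF v'V] .
  have v'S: "v' \<in> ?S" and vS: "v \<in> ?S" using vert_in vV v'V by blast+
  have sv: "(\<Sum>l\<in>UNIV. v$l) = real k" and sv': "(\<Sum>l\<in>UNIV. v'$l) = real k"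
    using vS v'S unfolding P_kn_def by auto
  have b1: "?f x \<le> x$i" if "x \<in> ?S" "v$i = 1" for x i
    using bounds(1)[OF k0 sf that(1) vV that(2)] .
  have b2: "?f x \<le> 1 - x$j" if "x \<in> ?S" "v$j = 0" for x j
    using bounds(2)[OF k0 sf that(1) vV that(2)] .
  have nn: "0 \<le> ?f x" if "\<forall>i. 0 \<le> x$i \<and> x$i \<le> 1" for x
    using P_vT_nonneg[OF bf that] .
  have nnS: "0 \<le> ?f x" if "x \<in> ?S" for x
    using nn that unfolding P_kn_def by auto
  obtain i0 where i0: "v$i0 = 1" "v'$i0 = 0"
  proof (rule ccontr)
    assume "\<not> thesis"
    hence le: "\<forall>i\<in>UNIV. v$i \<le> v'$i" using that v01 v'01 by (metis order.refl zero_le_one)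
    obtain i where "v$i \<noteq> v'$i" using assms(6) by (auto simp: vec_eq_iff)
    hence "\<exists>i\<in>UNIV. v$i < v'$i" using le by (auto simp: less_le)
    hence "(\<Sum>l\<in>UNIV. v$l) < (\<Sum>l\<in>UNIV. v'$l)" using le by (intro sum_strict_mono_ex1) auto
    thus False using sv sv' by simp
  qed
  obtain j0 where j0: "v$j0 = 0" "v'$j0 = 1"
  proof (rule ccontr)
    assume "\<not> thesis"
    hence le: "\<forall>i\<in>UNIV. v'$i \<le> v$i" using that v01 v'01 by (metis order.refl zero_le_one)
    obtain i where "v$i \<noteq> v'$i" using assms(6) by (auto simp: vec_eq_iff)
    hence "\<exists>i\<in>UNIV. v'$i < v$i" using le by (metis UNIV_I order_le_neq_trans)
    hence "(\<Sum>l\<in>UNIV. v'$l) < (\<Sum>l\<in>UNIV. v$l)" using le by (intro sum_strict_mono_ex1) auto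
    thus False using sv sv' by simp
  qed
  have f0: "?f v' = 0" using b1[OF v'S i0(1)] nnS[OF v'S] i0(2) by simp
  have good: "D (axis a 1) = D (axis b 1)"
    if ab: "v'$a = 0" "v'$b = 1" and g: "i0 \<noteq> a \<or> j0 \<noteq> b" for a b
  proof -
    have "D (axis a 1 - axis b 1) = 0"
    proof (rule dir_zero[OF fd f0 zero_less_one])
      fix s :: real assume s: "0 < s" "s \<le> 1"
      let ?x = "v' + s *\<^sub>R (axis a 1 - axis b 1)"
      have xS: "?x \<in> ?S" using seg_in[OF v'S ab] s by simp
      have "?f ?x \<le> 0"
      proof (cases "i0 \<noteq> a")
        case True
        have "i0 \<noteq> b" using i0 ab by auto
        have "?x $ i0 = 0" using seg_coord[OF True \<open>i0 \<noteq> b\<close>, of v' s] i0(2) by simp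
        thus ?thesis using b1[OF xS i0(1)] by simp
      next
        case False
        hence "j0 \<noteq> b" using g by simp
        moreover have "j0 \<noteq> a" using j0 ab by auto
        ultimately have "?x $ j0 = 1" using seg_coord[of j0 a b v' s] j0(2) by simp
        thus ?thesis using b2[OF xS j0(1)] by simp
      qed
      thus "?f ?x = 0" using nnS[OF xS] by simp
    qed
    thus ?thesis using linear_diff[OF lin] by simp
  qed
  have cards: "card {l. v'$l = 1} = k"
  proof -
    have "(\<Sum>l\<in>UNIV. v'$l) = real (card {l\<in>UNIV. v'$l = 1})"
      by (rule sum01_int) (use v'01 in auto)
    thus ?thesis using sv' by simp
  qed
  have cards0: "card {l. v'$l = 0} = CARD('n) - k"
  proof -
    have "{l. v'$l = 0} = UNIV - {l. v'$l = 1}" using v'01 by auto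
    thus ?thesis using cards by (simp add: card_Diff_subset)
  qed
  have eq: "D (axis a 1) = D (axis b 1)" if ab: "v'$a = 0" "v'$b = 1" for a b
  proof (cases "i0 \<noteq> a \<or> j0 \<noteq> b")
    case True thus ?thesis using good ab by blast
  next
    case False
    hence ia: "i0 = a" and jb: "j0 = b" by auto
    obtain c where c: "v'$c = 1" "c \<noteq> b"
    proof (rule ccontr)
      assume "\<not> thesis"
      hence "{l. v'$l = 1} \<subseteq> {b}" using that by auto
      hence "card {l. v'$l = 1} \<le> 1" using card_mono[of "{b}"] by fastforce
      thus False using cards assms(1) by simp
    qed
    obtain d where d: "v'$d = 0" "d \<noteq> a"
    proof (rule ccontr)
      assume "\<not> thesis"
      hence "{l. v'$l = 0} \<subseteq> {a}" using that by auto
      hence "card {l. v'$l = 0} \<le> 1" using card_mono[of "{a}"] by fastforce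
      thus False using cards0 assms(2) by simp
    qed
    have "D (axis a 1) = D (axis c 1)" using good[OF ab(1) c(1)] jb c(2) by simp
    also have "\<dots> = D (axis d 1)" using good[OF d(1) c(1)] ia d(2) by simp
    also have "\<dots> = D (axis b 1)" using good[OF d(1) ab(2)] ia d(2) by simp
    finally show ?thesis .
  qed
  have pa: "D (axis i0 1) \<ge> 0"
  proof (rule dir_nonneg[OF fd f0 zero_less_one])
    fix s :: real assume s: "0 < s" "s \<le> 1"
    have "\<forall>l. 0 \<le> (v' + s *\<^sub>R axis i0 1)$l \<and> (v' + s *\<^sub>R axis i0 1)$l \<le> 1"
      using v'S i0(2) s unfolding P_kn_def by (auto simp: axis_def)
    thus "0 \<le> ?f (v' + s *\<^sub>R axis i0 1)" by (rule nn)
  qed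
  have pb: "D (- axis j0 1) \<ge> 0"
  proof (rule dir_nonneg[OF fd f0 zero_less_one])
    fix s :: real assume s: "0 < s" "s \<le> 1"
    have "\<forall>l. 0 \<le> (v' + s *\<^sub>R (- axis j0 1))$l \<and> (v' + s *\<^sub>R (- axis j0 1))$l \<le> 1"
      using v'S j0(2) s unfolding P_kn_def by (auto simp: axis_def)
    thus "0 \<le> ?f (v' + s *\<^sub>R (- axis j0 1))" by (rule nn)
  qed
  have e0: "D (axis i0 1) = 0" "D (axis j0 1) = 0"
    using pa pb eq[OF i0(2) j0(2)] linear_neg[OF lin] by auto
  have all0: "D (axis l 1) = 0" for l
    using v'01[of l] eq[OF _ j0(2), of l] eq[OF i0(2), of l] e0 by auto
  have "D h = 0" for h
  proof -
    have "D h = D (\<Sum>i\<in>UNIV. h$i *\<^sub>R axis i 1)"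
      using basis_expansion[of h] by (simp add: scalar_mult_eq_scaleR)
    also have "\<dots> = (\<Sum>i\<in>UNIV. h$i *\<^sub>R D (axis i 1))"
      by (simp add: linear_sum[OF lin] linear_scale[OF lin])
    also have "\<dots> = 0" by (simp add: all0)
    finally show ?thesis .
  qed
  hence "D = (\<lambda>h. 0)" by auto
  thus ?thesis using fd by simp
qed

end
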